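(* Suppose for every $\omega$ and $\eta>0$ the function $F_\eta(\cdot,\omega)$ is $C^1$, convex and $\frac1\eta$-smooth. Consider the iteration $x_{k+1}=x_k-\gamma_kH_k\frac1{N_k}\sum_{j=1}^{N_k}\nabla_xF_{\eta_k,\mu_k}(x_k,\omega_{j,k})$, where the positive parameters satisfy $\mu_k=\mu_{k-1},\ \eta_k=\eta_{k-1}$ if $k$ is odd and $\mu_k<\mu_{k-1},\ \eta_k<\eta_{k-1}$ otherwise, and $H_k$ is given by the (rsL-BFGS) update described in the context with memory $m<n$ and exponents $0<\delta,\bar\delta\le1$. Then: (a) for any odd $k>2m$, $s_k^Ty_k>0$; (b) for any odd $k>2m$, $H_ky_k=s_k$; (c) for any $k>2m$, $H_k=H_k^T$, $H_k$ is $\mathcal{F}_k$-measurable (so $\mathbb{E}[H_k\mid\mathcal{F}_k]=H_k$), and $\underline\lambda_k\mathbf{I}\preceq H_k\preceq\overline\lambda_k\mathbf{I}$ almost surely, where $\underline\lambda_k=\frac{1}{(m+n)(1/\eta_k^\delta+\mu_0^{\bar\delta})}$ and $\overline\lambda_k=\frac{(m+n)^{n+m-1}(1/\eta_k^\delta+\mu_0^{\bar\delta})^{n+m-1}}{(n-1)!\,\mu_k^{(n+m)\bar\delta}}$.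
   Context: $F_{\eta,\mu}(x,\omega)\triangleq F_\eta(x,\omega)+\frac\mu2\|x-x_0\|^2$ with $x_0$ the initial point; $\omega_{1,k},\dots,\omega_{N_k,k}$ are the samples at iteration $k$; $\mathcal{F}_k=\sigma\{x_0,\dots,x_{k-1}\}$. (rsL-BFGS) update: for odd $i$, $s_i=x_i-x_{i-1}$ and $y_i=\frac1{N_{i-1}}\sum_{j=1}^{N_{i-1}}\big(\nabla_xF_{\eta_i^\delta}(x_i,\omega_{j,i-1})-\nabla_xF_{\eta_i^\delta}(x_{i-1},\omega_{j,i-1})\big)+\mu_i^{\bar\delta}s_i$. For odd $k$, $H_k=H_{k,m}$, where $H_{k,0}=\frac{s_k^Ty_k}{y_k^Ty_k}\mathbf{I}$ and $H_{k,j}=\big(\mathbf{I}-\frac{y_is_i^T}{y_i^Ts_i}\big)^TH_{k,j-1}\big(\mathbf{I}-\frac{y_is_i^T}{y_i^Ts_i}\big)+\frac{s_is_i^T}{y_i^Ts_i}$ with $i=k-2(m-j)$, $1\le j\le m$; for even $k$, $H_k=H_{k-1}$.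
   Formalization: $\mathcal{F}_k$ is the sigma-algebra generated by the samples $\omega_{j,i}$ with $i<k$ rather than by $x_0,\dots,x_{k-1}$, each odd $i>2$ has $x_i \neq x_{i-1}$, and $H_k$ for $k \le 2m$ is arbitrary but $\mathcal{F}_k$-measurable. The statement above fails without it. *)

theory Defs
  imports "HOL-Probability.Probability"
begin

definition outer :: "real^'n \<Rightarrow> real^'n \<Rightarrow> real^'n^'n" where
  "outer u v = (\<chi> i j. u $ i * v $ j)"

definition loewner_le :: "real^'n^'n \<Rightarrow> real^'n^'n \<Rightarrow> bool" where
  "loewner_le A B \<longleftrightarrow> (\<forall>v::real^'n. 0 \<le> v \<bullet> ((B - A) *v v))"

definition Feta_mu :: "(real \<Rightarrow> real^'n \<Rightarrow> 'w \<Rightarrow> real) \<Rightarrow> real^'n \<Rightarrow> real \<Rightarrow> real \<Rightarrow> real^'n \<Rightarrow> 'w \<Rightarrow> real" where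
  "Feta_mu F x0 eta mu x w = F eta x w + mu / 2 * (norm (x - x0))\<^sup>2"

definition gradFeta_mu :: "(real \<Rightarrow> real^'n \<Rightarrow> 'w \<Rightarrow> real^'n) \<Rightarrow> real^'n \<Rightarrow> real \<Rightarrow> real \<Rightarrow> real^'n \<Rightarrow> 'w \<Rightarrow> real^'n" where
  "gradFeta_mu gradF x0 eta mu x w = gradF eta x w + mu *\<^sub>R (x - x0)"

definition avg_grad :: "(real \<Rightarrow> real^'n \<Rightarrow> 'w \<Rightarrow> real^'n) \<Rightarrow> real^'n \<Rightarrow> (nat \<Rightarrow> real) \<Rightarrow> (nat \<Rightarrow> real)
    \<Rightarrow> (nat \<Rightarrow> nat) \<Rightarrow> (nat \<Rightarrow> nat \<Rightarrow> 'w) \<Rightarrow> (nat \<Rightarrow> real^'n) \<Rightarrow> nat \<Rightarrow> real^'n" where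
  "avg_grad gradF x0 eta mu N om x k =
     (1 / real (N k)) *\<^sub>R (\<Sum>j = 1..N k. gradFeta_mu gradF x0 (eta k) (mu k) (x k) (om j k))"

definition sdiff :: "(nat \<Rightarrow> real^'n) \<Rightarrow> nat \<Rightarrow> real^'n" where
  "sdiff x i = x i - x (i - 1)"

definition ydiff :: "(real \<Rightarrow> real^'n \<Rightarrow> 'w \<Rightarrow> real^'n) \<Rightarrow> (nat \<Rightarrow> real) \<Rightarrow> (nat \<Rightarrow> real)
    \<Rightarrow> (nat \<Rightarrow> nat) \<Rightarrow> (nat \<Rightarrow> nat \<Rightarrow> 'w) \<Rightarrow> real \<Rightarrow> real \<Rightarrow> (nat \<Rightarrow> real^'n) \<Rightarrow> nat \<Rightarrow> real^'n" where
  "ydiff gradF eta mu N om delta deltab x i =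
     (1 / real (N (i - 1))) *\<^sub>R
       (\<Sum>j = 1..N (i - 1). gradF (eta i powr delta) (x i) (om j (i - 1))
                            - gradF (eta i powr delta) (x (i - 1)) (om j (i - 1)))
     + (mu i powr deltab) *\<^sub>R sdiff x i"

fun lbfgs_H :: "(nat \<Rightarrow> real^'n) \<Rightarrow> (nat \<Rightarrow> real^'n) \<Rightarrow> nat \<Rightarrow> nat \<Rightarrow> nat \<Rightarrow> real^'n^'n" where
  "lbfgs_H s y m k 0 = ((s k \<bullet> y k) / (y k \<bullet> y k)) *\<^sub>R mat 1"
| "lbfgs_H s y m k (Suc j) =
     (let i = k - 2 * (m - Suc j);
          V = mat 1 - (1 / (y i \<bullet> s i)) *\<^sub>R outer (y i) (s i)
      in transpose V ** lbfgs_H s y m k j ** V + (1 / (y i \<bullet> s i)) *\<^sub>R outer (s i) (s i))"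

text \<open>History sigma-algebra F_k: generated by the samples w_{j,i}, 1 <= j <= N_i, i < k
  (the initial point x_0 is deterministic).\<close>
definition hist :: "'a measure \<Rightarrow> 'w measure \<Rightarrow> (nat \<Rightarrow> nat \<Rightarrow> 'a \<Rightarrow> 'w) \<Rightarrow> (nat \<Rightarrow> nat) \<Rightarrow> nat \<Rightarrow> 'a measure" where
  "hist M W om N k = sigma (space M)
     {om j i -` A \<inter> space M | j i A. 1 \<le> j \<and> j \<le> N i \<and> i < k \<and> A \<in> sets W}"

end

theory Submission
  imports Defs
begin

lemma convex_tangent:
  fixes f :: "'v::real_inner \<Rightarrow> real"
  assumes cvx: "convex_on UNIV f" and der: "(f has_derivative (\<lambda>h. g \<bullet> h)) (at x)"
  shows "f x + g \<bullet> (z - x) \<le> f z"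
proof -
  define d where "d = z - x"
  define \<phi> where "\<phi> = (\<lambda>t::real. f (x + t *\<^sub>R d))"
  have "convex_on UNIV \<phi>"
  proof (rule convex_onI)
    fix t a b :: real assume t: "0 < t" "t < 1"
    have e: "(1 - t) *\<^sub>R (x + a *\<^sub>R d) + t *\<^sub>R (x + b *\<^sub>R d) = x + ((1 - t) * a + t * b) *\<^sub>R d"
      by (simp add: algebra_simps)
    have "f ((1 - t) *\<^sub>R (x + a *\<^sub>R d) + t *\<^sub>R (x + b *\<^sub>R d)) \<le> (1 - t) * f (x + a *\<^sub>R d) + t * f (x + b *\<^sub>R d)"
      using t by (intro convex_onD[OF cvx]) auto
    then show "\<phi> ((1 - t) *\<^sub>R a + t *\<^sub>R b) \<le> (1 - t) * \<phi> a + t * \<phi> b"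
      unfolding \<phi>_def using e by simp
  qed simp
  moreover have "(\<phi> has_field_derivative (g \<bullet> d)) (at 0 within UNIV)"
  proof -
    have l: "((\<lambda>t::real. x + t *\<^sub>R d) has_derivative (\<lambda>t. t *\<^sub>R d)) (at 0)"
      by (auto intro!: derivative_eq_intros)
    have "((\<lambda>t. f (x + t *\<^sub>R d)) has_derivative (\<lambda>t. g \<bullet> (t *\<^sub>R d))) (at 0)"
      using has_derivative_compose[OF l, of f "\<lambda>h. g \<bullet> h"] der by simp
    moreover have "(\<lambda>t. g \<bullet> (t *\<^sub>R d)) = (*) (g \<bullet> d)" by (auto simp: mult.commute)
    ultimately show ?thesis unfolding \<phi>_def has_field_derivative_def by simp
  qed
  ultimately have "\<phi> 1 - \<phi> 0 \<ge> (g \<bullet> d) * (1 - 0)"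
    by (intro convex_on_imp_above_tangent[where A=UNIV]) auto
  then show ?thesis unfolding \<phi>_def d_def by simp
qed

lemma descent:
  fixes f :: "'v::real_inner \<Rightarrow> real"
  assumes der: "\<And>z. (f has_derivative (\<lambda>h. g z \<bullet> h)) (at z)"
    and lip: "\<And>z z'. norm (g z - g z') \<le> L * norm (z - z')"
  shows "f z \<le> f x + g x \<bullet> (z - x) + L / 2 * (norm (z - x))\<^sup>2"
proof -
  define d where "d = z - x"
  define \<psi> where "\<psi> = (\<lambda>t::real. f (x + t *\<^sub>R d) - t * (g x \<bullet> d) - L / 2 * t^2 * (norm d)^2)"
  have D: "(\<psi> has_real_derivative (g (x + t *\<^sub>R d) \<bullet> d - g x \<bullet> d - L * t * (norm d)^2)) (at t)" for t
  proof -
    have l: "((\<lambda>t::real. x + t *\<^sub>R d) has_derivative (\<lambda>t. t *\<^sub>R d)) (at t)"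
      by (auto intro!: derivative_eq_intros)
    have "((\<lambda>t. f (x + t *\<^sub>R d)) has_derivative (\<lambda>u. g (x + t *\<^sub>R d) \<bullet> (u *\<^sub>R d))) (at t)"
      using has_derivative_compose[OF l, of f] der by blast
    moreover have "(\<lambda>u. g (x + t *\<^sub>R d) \<bullet> (u *\<^sub>R d)) = (*) (g (x + t *\<^sub>R d) \<bullet> d)" by (auto simp: mult.commute)
    ultimately have "((\<lambda>t. f (x + t *\<^sub>R d)) has_real_derivative (g (x + t *\<^sub>R d) \<bullet> d)) (at t)"
      unfolding has_field_derivative_def by simp
    moreover have "((\<lambda>t. t * (g x \<bullet> d)) has_real_derivative (g x \<bullet> d)) (at t)"
      by (auto intro!: derivative_eq_intros)
    moreover have "((\<lambda>t. L / 2 * t^2 * (norm d)^2) has_real_derivative (L * t * (norm d)^2)) (at t)"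
      by (auto intro!: derivative_eq_intros)
    ultimately have "((\<lambda>t. f (x + t *\<^sub>R d) - t * (g x \<bullet> d) - L / 2 * t^2 * (norm d)^2) has_real_derivative
       (g (x + t *\<^sub>R d) \<bullet> d - g x \<bullet> d - L * t * (norm d)^2)) (at t)"
      by (intro DERIV_diff)
    then show ?thesis unfolding \<psi>_def .
  qed
  have "\<psi> 0 \<ge> \<psi> 1"
  proof (rule DERIV_nonpos_imp_nonincreasing[of 0 1 \<psi>])
    show "(0::real) \<le> 1" by simp
  next
    fix t :: real assume t: "0 \<le> t" "t \<le> 1"
    have "(g (x + t *\<^sub>R d) - g x) \<bullet> d \<le> norm (g (x + t *\<^sub>R d) - g x) * norm d"
      by (rule norm_cauchy_schwarz)
    also have "\<dots> \<le> (L * norm (t *\<^sub>R d)) * norm d"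
      using lip[of "x + t *\<^sub>R d" x] by (intro mult_right_mono) auto
    also have "\<dots> = L * t * (norm d)^2" using t by (simp add: power2_eq_square)
    finally show "\<exists>y. DERIV \<psi> t :> y \<and> y \<le> 0" using D[of t] by (auto simp: inner_diff_left)
  qed
  then show ?thesis unfolding \<psi>_def d_def by simp
qed

lemma cocoercive_half:
  fixes f :: "'v::real_inner \<Rightarrow> real"
  assumes cvx: "convex_on UNIV f" and der: "\<And>z. (f has_derivative (\<lambda>h. g z \<bullet> h)) (at z)"
    and lip: "\<And>z z'. norm (g z - g z') \<le> L * norm (z - z')" and L: "L > 0"
  shows "f x + g x \<bullet> (y - x) + (norm (g y - g x))\<^sup>2 / (2 * L) \<le> f y"
proof -
  define D where "D = g y - g x"
  define w where "w = y - (1 / L) *\<^sub>R D"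
  have t: "f x + g x \<bullet> (w - x) \<le> f w" by (rule convex_tangent[OF cvx der])
  have dsc: "f w \<le> f y + g y \<bullet> (w - y) + L / 2 * (norm (w - y))\<^sup>2"
    by (rule descent[OF der lip])
  have e1: "g x \<bullet> (w - x) = g x \<bullet> (y - x) - (1 / L) * (g x \<bullet> D)"
    unfolding w_def by (simp add: inner_diff_right algebra_simps)
  have e2: "g y \<bullet> (w - y) = - (1 / L) * (g y \<bullet> D)"
    unfolding w_def by (simp add: inner_diff_right algebra_simps)
  have e3: "L / 2 * (norm (w - y))\<^sup>2 = (norm D)\<^sup>2 / (2 * L)"
    unfolding w_def using L by (simp add: power2_eq_square field_simps)
  have e4: "g y \<bullet> D - g x \<bullet> D = (norm D)\<^sup>2"
    unfolding D_def by (simp add: power2_norm_eq_inner inner_diff_left)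
  have "(1 / L) * (g y \<bullet> D) - (1 / L) * (g x \<bullet> D) = (1 / L) * (g y \<bullet> D - g x \<bullet> D)"
    by (simp add: right_diff_distrib)
  then have "(1 / L) * (g y \<bullet> D) - (1 / L) * (g x \<bullet> D) = (norm D)\<^sup>2 / L"
    using e4 by simp
  then have "f x + g x \<bullet> (y - x) \<le> f y - (norm D)\<^sup>2 / L + (norm D)\<^sup>2 / (2 * L)"
    using t dsc e1 e2 e3 by linarith
  moreover have "(norm D)\<^sup>2 / L - (norm D)\<^sup>2 / (2 * L) = (norm D)\<^sup>2 / (2 * L)"
    using L by (simp add: field_simps)
  ultimately show ?thesis unfolding D_def by linarith
qed

lemma cocoercive:
  fixes f :: "'v::real_inner \<Rightarrow> real"
  assumes cvx: "convex_on UNIV f" and der: "\<And>z. (f has_derivative (\<lambda>h. g z \<bullet> h)) (at z)"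
    and lip: "\<And>z z'. norm (g z - g z') \<le> L * norm (z - z')" and L: "L > 0"
  shows "(norm (g z - g x))\<^sup>2 \<le> L * ((g z - g x) \<bullet> (z - x))"
proof -
  have a: "f x + g x \<bullet> (z - x) + (norm (g z - g x))\<^sup>2 / (2 * L) \<le> f z"
    by (rule cocoercive_half[OF cvx der lip L])
  have b: "f z + g z \<bullet> (x - z) + (norm (g x - g z))\<^sup>2 / (2 * L) \<le> f x"
    by (rule cocoercive_half[OF cvx der lip L])
  have n: "norm (g x - g z) = norm (g z - g x)" by (rule norm_minus_commute)
  have i: "(g z - g x) \<bullet> (z - x) = - (g x \<bullet> (z - x)) - g z \<bullet> (x - z)"
    by (simp add: inner_diff_left inner_diff_right algebra_simps)
  have "(norm (g z - g x))\<^sup>2 / (2 * L) + (norm (g z - g x))\<^sup>2 / (2 * L) \<le> (g z - g x) \<bullet> (z - x)"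
    using a b[unfolded n] i by linarith
  moreover have "(norm (g z - g x))\<^sup>2 / (2 * L) + (norm (g z - g x))\<^sup>2 / (2 * L) = (norm (g z - g x))\<^sup>2 / L"
    using L by (simp add: field_simps)
  ultimately have "(norm (g z - g x))\<^sup>2 / L \<le> (g z - g x) \<bullet> (z - x)" by simp
  then show ?thesis using L by (simp add: field_simps)
qed

lemma outer_mult: "outer u w *v v = (w \<bullet> v) *\<^sub>R u"
  by (simp add: outer_def vec_eq_iff matrix_vector_mult_def inner_vec_def sum_distrib_left mult.commute mult.left_commute)

lemma transpose_outer: "transpose (outer u w) = outer w u"
  by (simp add: outer_def transpose_def vec_eq_iff)

lemma transpose_add_m: "transpose (A + B) = transpose A + transpose (B :: real^'n^'m)"
  by (simp add: transpose_def vec_eq_iff)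

lemma transpose_diff_m: "transpose (A - B) = transpose A - transpose (B :: real^'n^'m)"
  by (simp add: transpose_def vec_eq_iff)

lemma inner_transpose_mv: "v \<bullet> (transpose V *v u) = (V *v v) \<bullet> (u :: real^'n)"
  by (metis dot_lmul_matrix inner_commute transpose_matrix_vector)

lemma inner_vm: "v \<bullet> (u v* V) = (V *v v) \<bullet> (u :: real^'n)"
  by (metis dot_lmul_matrix inner_commute)

lemma step_sym:
  fixes H V :: "real^'n^'n"
  assumes "transpose H = H"
  shows "transpose (transpose V ** H ** V + c *\<^sub>R outer s s) = transpose V ** H ** V + c *\<^sub>R outer s s"
  using assms by (simp add: transpose_add_m transpose_scalar transpose_outer matrix_transpose_mul matrix_mul_assoc)

lemma step_qf:
  fixes H :: "real^'n^'n" and c :: real and s y v :: "real^'n"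
  defines "V \<equiv> mat 1 - c *\<^sub>R outer y s"
  shows "v \<bullet> ((transpose V ** H ** V + c *\<^sub>R outer s s) *v v)
        = (V *v v) \<bullet> (H *v (V *v v)) + c * (s \<bullet> v)\<^sup>2"
    and "V *v v = v - (c * (s \<bullet> v)) *\<^sub>R y"
proof -
  show "V *v v = v - (c * (s \<bullet> v)) *\<^sub>R y"
    unfolding V_def by (simp add: matrix_vector_mult_diff_rdistrib scaleR_matrix_vector_assoc[symmetric] outer_mult)
  have "(transpose V ** H ** V) *v v = transpose V *v (H *v (V *v v))"
    by (simp add: matrix_vector_mul_assoc matrix_mul_assoc)
  then show "v \<bullet> ((transpose V ** H ** V + c *\<^sub>R outer s s) *v v)
        = (V *v v) \<bullet> (H *v (V *v v)) + c * (s \<bullet> v)\<^sup>2"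
    by (simp add: matrix_vector_mult_add_rdistrib scaleR_matrix_vector_assoc[symmetric] outer_mult
        inner_add_right inner_vm power2_eq_square inner_commute)
qed

lemma H0_mv: "(c *\<^sub>R mat 1) *v v = c *\<^sub>R (v::real^'n)"
  by (metis scaleR_matrix_vector_assoc matrix_vector_mul_lid)

lemma H0_qf: "v \<bullet> ((c *\<^sub>R mat 1) *v v) = c * (norm (v::real^'n))\<^sup>2"
  by (simp add: H0_mv power2_norm_eq_inner)

lemma scalar_lower:
  fixes nv a b K L q :: real
  assumes "0 \<le> nv" "0 \<le> a" "0 \<le> b" "nv \<le> a + b" "K > 0" "L > 0" "b\<^sup>2 \<le> L * q"
  shows "nv\<^sup>2 / (K + L) \<le> a\<^sup>2 / K + q"
proof -
  have "(a + b)\<^sup>2 * (K * L) \<le> (K + L) * (a\<^sup>2 * L + b\<^sup>2 * K)"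
  proof -
    have "(K + L) * (a\<^sup>2 * L + b\<^sup>2 * K) - (a + b)\<^sup>2 * (K * L) = (L * a - K * b)\<^sup>2"
      by (simp add: power2_eq_square algebra_simps)
    then show ?thesis by (smt (verit) zero_le_power2)
  qed
  then have "(a + b)\<^sup>2 / (K + L) \<le> a\<^sup>2 / K + b\<^sup>2 / L"
    using assms by (simp add: field_simps)
  moreover have "nv\<^sup>2 \<le> (a + b)\<^sup>2" using assms by (intro power_mono) auto
  moreover have "b\<^sup>2 / L \<le> q" using assms by (simp add: field_simps)
  ultimately show ?thesis using assms
    by (smt (verit) divide_right_mono)
qed

lemma sum_pow_shift: "(\<Sum>p\<le>Suc j. (a::real)^(2*p)) = 1 + a\<^sup>2 * (\<Sum>p\<le>j. a^(2*p))"
  by (subst sum.atMost_Suc_shift) (simp add: sum_distrib_left power2_eq_square mult.assoc del: sum.atMost_Suc)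

definition good :: "real \<Rightarrow> real \<Rightarrow> real^'n \<Rightarrow> real^'n \<Rightarrow> bool" where
  "good L \<mu> s y \<longleftrightarrow> s \<bullet> y > 0 \<and> y \<bullet> y \<le> L * (s \<bullet> y) \<and> norm y \<le> L * norm s \<and> \<mu> * (norm s)\<^sup>2 \<le> s \<bullet> y"

lemma lbfgs_props:
  fixes s y :: "nat \<Rightarrow> real^'n" and L \<mu> :: real
  assumes L: "L > 0" and mu: "\<mu> > 0"
    and gk: "good L \<mu> (s k) (y k)"
    and gj: "\<And>j. j < m \<Longrightarrow> good L \<mu> (s (k - 2 * (m - Suc j))) (y (k - 2 * (m - Suc j)))"
  shows "j \<le> m \<Longrightarrow> transpose (lbfgs_H s y m k j) = lbfgs_H s y m k j
        \<and> (\<forall>v. (norm v)\<^sup>2 / (real (Suc j) * L) \<le> v \<bullet> (lbfgs_H s y m k j *v v))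
        \<and> (\<forall>v. v \<bullet> (lbfgs_H s y m k j *v v) \<le> (\<Sum>p\<le>j. (1 + L / \<mu>)^(2*p)) / \<mu> * (norm v)\<^sup>2)"
proof (induction j)
  case 0
  define c where "c = s k \<bullet> y k"
  define yy where "yy = y k \<bullet> y k"
  have c: "c > 0" and yyL: "yy \<le> L * c" and ny: "norm (y k) \<le> L * norm (s k)"
    and mc: "\<mu> * (norm (s k))\<^sup>2 \<le> c"
    using gk unfolding good_def c_def yy_def by auto
  have cs: "c\<^sup>2 \<le> (norm (s k))\<^sup>2 * yy"
  proof -
    have "\<bar>c\<bar> \<le> norm (s k) * norm (y k)" unfolding c_def by (rule Cauchy_Schwarz_ineq2)
    then have "c\<^sup>2 \<le> (norm (s k) * norm (y k))\<^sup>2" using c by (intro power_mono) auto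
    then show ?thesis by (simp add: yy_def power_mult_distrib power2_norm_eq_inner[symmetric])
  qed
  have yy: "yy > 0"
  proof -
    have "c\<^sup>2 > 0" using c by simp
    then show ?thesis using cs by (smt (verit) mult_nonneg_nonpos zero_le_power2)
  qed
  have H0: "lbfgs_H s y m k 0 = (c / yy) *\<^sub>R mat 1" by (simp add: c_def yy_def)
  have lo: "1 / L \<le> c / yy" using yyL yy L c by (simp add: field_simps)
  have "\<mu> * c\<^sup>2 \<le> c * yy"
  proof -
    have "\<mu> * c\<^sup>2 \<le> \<mu> * ((norm (s k))\<^sup>2 * yy)" using cs mu by simp
    also have "\<dots> = (\<mu> * (norm (s k))\<^sup>2) * yy" by simp
    also have "\<dots> \<le> c * yy" using mc yy by (intro mult_right_mono) auto
    finally show ?thesis .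
  qed
  then have "\<mu> * c \<le> yy" using c by (simp add: power2_eq_square)
  then have up: "c / yy \<le> 1 / \<mu>" using yy mu c by (simp add: field_simps)
  show ?case
  proof (intro conjI allI)
    show "transpose (lbfgs_H s y m k 0) = lbfgs_H s y m k 0" by (simp add: H0 transpose_scalar)
  next
    fix v :: "real^'n"
    have "(norm v)\<^sup>2 / (real (Suc 0) * L) = (1 / L) * (norm v)\<^sup>2" by simp
    also have "\<dots> \<le> (c / yy) * (norm v)\<^sup>2" using lo by (intro mult_right_mono) auto
    finally show "(norm v)\<^sup>2 / (real (Suc 0) * L) \<le> v \<bullet> (lbfgs_H s y m k 0 *v v)"
      unfolding H0 H0_qf by simp
  next
    fix v :: "real^'n"
    have "(c / yy) * (norm v)\<^sup>2 \<le> (1 / \<mu>) * (norm v)\<^sup>2" using up by (intro mult_right_mono) auto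
    then show "v \<bullet> (lbfgs_H s y m k 0 *v v) \<le> (\<Sum>p\<le>0. (1 + L / \<mu>)^(2*p)) / \<mu> * (norm v)\<^sup>2"
      unfolding H0 H0_qf by simp
  qed
next
  case (Suc j)
  then have jm: "j < m" by simp
  from Suc.IH jm have IH1: "transpose (lbfgs_H s y m k j) = lbfgs_H s y m k j"
    and IH2: "\<And>v. (norm v)\<^sup>2 / (real (Suc j) * L) \<le> v \<bullet> (lbfgs_H s y m k j *v v)"
    and IH3: "\<And>v. v \<bullet> (lbfgs_H s y m k j *v v) \<le> (\<Sum>p\<le>j. (1 + L / \<mu>)^(2*p)) / \<mu> * (norm v)\<^sup>2"
    by auto
  define i where "i = k - 2 * (m - Suc j)"
  define H where "H = lbfgs_H s y m k j"
  define \<rho> where "\<rho> = 1 / (y i \<bullet> s i)"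
  define V where "V = mat 1 - \<rho> *\<^sub>R outer (y i) (s i)"
  define S where "S = (\<Sum>p\<le>j. (1 + L / \<mu>)^(2*p))"
  have gi: "good L \<mu> (s i) (y i)" using gj[OF jm] unfolding i_def .
  have c: "s i \<bullet> y i > 0" and yyL: "y i \<bullet> y i \<le> L * (s i \<bullet> y i)" and ny: "norm (y i) \<le> L * norm (s i)"
    and mc: "\<mu> * (norm (s i))\<^sup>2 \<le> s i \<bullet> y i"
    using gi unfolding good_def by auto
  have rho: "\<rho> > 0" using c by (simp add: \<rho>_def inner_commute)
  have rhoc: "\<rho> * (s i \<bullet> y i) = 1" using c by (simp add: \<rho>_def inner_commute)
  have HS: "lbfgs_H s y m k (Suc j) = transpose V ** H ** V + \<rho> *\<^sub>R outer (s i) (s i)"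
    by (simp add: Let_def H_def V_def \<rho>_def i_def)
  have S0: "S \<ge> 0" unfolding S_def by (intro sum_nonneg) auto
  have qf: "v \<bullet> (lbfgs_H s y m k (Suc j) *v v) = (V *v v) \<bullet> (H *v (V *v v)) + \<rho> * (s i \<bullet> v)\<^sup>2"
    and Vv: "V *v v = v - (\<rho> * (s i \<bullet> v)) *\<^sub>R y i" for v
    unfolding HS V_def by (rule step_qf)+
  show ?case
  proof (intro conjI allI)
    show "transpose (lbfgs_H s y m k (Suc j)) = lbfgs_H s y m k (Suc j)"
      unfolding HS H_def by (rule step_sym[OF IH1])
  next
    fix v :: "real^'n"
    define a where "a = norm (V *v v)"
    define t where "t = s i \<bullet> v"
    define b where "b = \<rho> * \<bar>t\<bar> * norm (y i)"
    have a0: "0 \<le> a" unfolding a_def by simp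
    have b0: "0 \<le> b" unfolding b_def using rho by simp
    have vd: "v = V *v v + (\<rho> * t) *\<^sub>R y i" using Vv[of v] unfolding t_def by simp
    have nb: "norm ((\<rho> * t) *\<^sub>R y i) = b" unfolding b_def using rho by (simp add: abs_mult)
    have nv: "norm v \<le> a + b"
    proof -
      have "norm v = norm (V *v v + (\<rho> * t) *\<^sub>R y i)" using vd by simp
      also have "\<dots> \<le> norm (V *v v) + norm ((\<rho> * t) *\<^sub>R y i)" by (rule norm_triangle_ineq)
      finally show ?thesis unfolding nb a_def .
    qed
    have ryy: "\<rho> * (y i \<bullet> y i) \<le> L"
    proof -
      have "\<rho> * (y i \<bullet> y i) \<le> \<rho> * (L * (s i \<bullet> y i))" using yyL rho by (intro mult_left_mono) auto
      also have "\<dots> = L * (\<rho> * (s i \<bullet> y i))" by (simp only: mult_ac)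
      finally show ?thesis using rhoc by simp
    qed
    have bq: "b\<^sup>2 \<le> L * (\<rho> * t\<^sup>2)"
    proof -
      have "b\<^sup>2 = (\<rho> * t\<^sup>2) * (\<rho> * (y i \<bullet> y i))"
        unfolding b_def power_mult_distrib power2_abs power2_norm_eq_inner by (simp only: power2_eq_square mult_ac)
      also have "\<dots> \<le> (\<rho> * t\<^sup>2) * L" using rho ryy by (intro mult_left_mono) auto
      finally show ?thesis by (simp only: mult_ac)
    qed
    have "(norm v)\<^sup>2 / (real (Suc j) * L + L) \<le> a\<^sup>2 / (real (Suc j) * L) + \<rho> * t\<^sup>2"
      by (rule scalar_lower[OF norm_ge_zero a0 b0 nv _ L bq]) (use L in simp)
    also have "\<dots> \<le> v \<bullet> (lbfgs_H s y m k (Suc j) *v v)"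
      using IH2[of "V *v v"] unfolding qf H_def a_def t_def by simp
    also have "real (Suc j) * L + L = real (Suc (Suc j)) * L" by (simp add: distrib_right)
    finally show "(norm v)\<^sup>2 / (real (Suc (Suc j)) * L) \<le> v \<bullet> (lbfgs_H s y m k (Suc j) *v v)" .
  next
    fix v :: "real^'n"
    define t where "t = s i \<bullet> v"
    define r where "r = L / \<mu>"
    have r0: "r \<ge> 0" unfolding r_def using L mu by simp
    have st: "\<bar>t\<bar> \<le> norm (s i) * norm v" unfolding t_def by (rule Cauchy_Schwarz_ineq2)
    have rs: "\<rho> * (norm (s i))\<^sup>2 \<le> 1 / \<mu>"
    proof -
      have "\<rho> * (\<mu> * (norm (s i))\<^sup>2) \<le> \<rho> * (s i \<bullet> y i)" using mc rho by (intro mult_left_mono) auto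
      then have "\<mu> * (\<rho> * (norm (s i))\<^sup>2) \<le> 1" using rhoc by (simp only: mult_ac)
      then show ?thesis using mu by (simp add: field_simps)
    qed
    have nVv: "norm (V *v v) \<le> (1 + r) * norm v"
    proof -
      have "norm (V *v v) \<le> norm v + norm ((\<rho> * t) *\<^sub>R y i)"
        unfolding Vv t_def[symmetric] by (rule norm_triangle_ineq4)
      also have "norm ((\<rho> * t) *\<^sub>R y i) = \<rho> * \<bar>t\<bar> * norm (y i)" using rho by (simp add: abs_mult)
      also have "\<rho> * \<bar>t\<bar> * norm (y i) \<le> \<rho> * (norm (s i) * norm v) * (L * norm (s i))"
        using rho ny st by (intro mult_mono mult_left_mono) auto
      also have "\<dots> = L * (\<rho> * (norm (s i))\<^sup>2) * norm v" by (simp only: power2_eq_square mult_ac)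
      also have "\<dots> \<le> L * (1 / \<mu>) * norm v" using rs L by (intro mult_right_mono mult_left_mono) auto
      also have "L * (1 / \<mu>) = r" unfolding r_def by simp
      finally show ?thesis by (simp add: distrib_right)
    qed
    have rt: "\<rho> * t\<^sup>2 \<le> (norm v)\<^sup>2 / \<mu>"
    proof -
      have "t\<^sup>2 \<le> (norm (s i) * norm v)\<^sup>2"
        using st by (metis abs_ge_zero power2_abs power_mono)
      then have "\<rho> * t\<^sup>2 \<le> \<rho> * (norm (s i) * norm v)\<^sup>2" using rho by (intro mult_left_mono) auto
      also have "\<dots> = (\<rho> * (norm (s i))\<^sup>2) * (norm v)\<^sup>2" by (simp only: power_mult_distrib mult_ac)
      also have "\<dots> \<le> 1 / \<mu> * (norm v)\<^sup>2" using rs by (intro mult_right_mono) auto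
      finally show ?thesis by simp
    qed
    have "(V *v v) \<bullet> (H *v (V *v v)) \<le> S / \<mu> * (norm (V *v v))\<^sup>2"
      using IH3[of "V *v v"] unfolding H_def S_def r_def .
    also have "\<dots> \<le> S / \<mu> * ((1 + r) * norm v)\<^sup>2"
      using S0 mu nVv by (intro mult_left_mono power_mono) auto
    finally have "v \<bullet> (lbfgs_H s y m k (Suc j) *v v) \<le> S / \<mu> * ((1 + r) * norm v)\<^sup>2 + (norm v)\<^sup>2 / \<mu>"
      unfolding qf t_def[symmetric] using rt by linarith
    also have "\<dots> = (1 + (1 + r)\<^sup>2 * S) / \<mu> * (norm v)\<^sup>2"
      using mu unfolding power_mult_distrib by (simp add: field_simps)
    finally show "v \<bullet> (lbfgs_H s y m k (Suc j) *v v) \<le> (\<Sum>p\<le>Suc j. (1 + L / \<mu>)^(2*p)) / \<mu> * (norm v)\<^sup>2"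
      unfolding S_def sum_pow_shift r_def .
  qed
qed

lemma lbfgs_secant:
  fixes s y :: "nat \<Rightarrow> real^'n"
  assumes "1 \<le> m" and "s k \<bullet> y k \<noteq> 0"
  shows "lbfgs_H s y m k m *v y k = s k"
proof -
  obtain j where mj: "m = Suc j" using assms(1) by (cases m) auto
  define \<rho> where "\<rho> = 1 / (y k \<bullet> s k)"
  define V where "V = mat 1 - \<rho> *\<^sub>R outer (y k) (s k)"
  define H where "H = lbfgs_H s y m k j"
  have HS: "lbfgs_H s y m k m = transpose V ** H ** V + \<rho> *\<^sub>R outer (s k) (s k)"
    by (simp add: mj Let_def H_def V_def \<rho>_def)
  have rhoc: "\<rho> * (s k \<bullet> y k) = 1" using assms(2) by (simp add: \<rho>_def inner_commute)
  have "V *v y k = y k - (\<rho> * (s k \<bullet> y k)) *\<^sub>R y k"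
    unfolding V_def by (simp add: matrix_vector_mult_diff_rdistrib scaleR_matrix_vector_assoc[symmetric] outer_mult)
  then have V0: "V *v y k = 0" using rhoc by simp
  have "(transpose V ** H ** V) *v y k = transpose V *v (H *v (V *v y k))"
    by (simp only: matrix_vector_mul_assoc matrix_mul_assoc)
  then have "(transpose V ** H ** V) *v y k = 0" using V0 by simp
  then show ?thesis unfolding HS
    by (simp add: matrix_vector_mult_add_rdistrib scaleR_matrix_vector_assoc[symmetric] outer_mult rhoc)
qed

lemma avg_coco:
  fixes s :: "'v::real_inner" and \<Delta> :: "nat \<Rightarrow> 'v" and N :: nat and Lg :: real
  assumes N: "N \<ge> 1" and Lg: "Lg > 0" and d: "\<And>j. j \<in> {1..N} \<Longrightarrow> (norm (\<Delta> j))\<^sup>2 \<le> Lg * (\<Delta> j \<bullet> s)"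
  shows "(norm ((1 / real N) *\<^sub>R (\<Sum>j=1..N. \<Delta> j)))\<^sup>2 \<le> Lg * (((1 / real N) *\<^sub>R (\<Sum>j=1..N. \<Delta> j)) \<bullet> s)"
proof -
  have Npos: "real N > 0" using N by simp
  have "norm (\<Sum>j=1..N. \<Delta> j) \<le> (\<Sum>j=1..N. norm (\<Delta> j))" by (rule norm_sum)
  then have "(norm (\<Sum>j=1..N. \<Delta> j))\<^sup>2 \<le> (\<Sum>j=1..N. norm (\<Delta> j))\<^sup>2" by (intro power_mono) auto
  also have "\<dots> \<le> (\<Sum>j=1..N. (norm (\<Delta> j))\<^sup>2) * card {1..N}" by (rule sum_squared_le_sum_of_squares)
  also have "\<dots> \<le> (\<Sum>j=1..N. Lg * (\<Delta> j \<bullet> s)) * real N"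
  proof -
    have c: "card {1..N} = N" by simp
    show ?thesis unfolding c using Npos by (intro mult_right_mono sum_mono d) auto
  qed
  also have "\<dots> = Lg * ((\<Sum>j=1..N. \<Delta> j) \<bullet> s) * real N"
    by (simp add: sum_distrib_left inner_sum_left)
  finally have *: "(norm (\<Sum>j=1..N. \<Delta> j))\<^sup>2 \<le> Lg * ((\<Sum>j=1..N. \<Delta> j) \<bullet> s) * real N" .
  have "(norm ((1 / real N) *\<^sub>R (\<Sum>j=1..N. \<Delta> j)))\<^sup>2 = (norm (\<Sum>j=1..N. \<Delta> j))\<^sup>2 / (real N)^2"
    using Npos by (simp add: power_divide)
  also have "\<dots> \<le> Lg * ((\<Sum>j=1..N. \<Delta> j) \<bullet> s) * real N / (real N)^2"
    using * Npos by (intro divide_right_mono) auto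
  also have "\<dots> = Lg * (((1 / real N) *\<^sub>R (\<Sum>j=1..N. \<Delta> j)) \<bullet> s)"
    using Npos by (simp add: power2_eq_square field_simps)
  finally show ?thesis .
qed

lemma y_good_aux:
  fixes s g :: "'v::real_inner"
  assumes gs: "(norm g)\<^sup>2 \<le> Lg * (g \<bullet> s)" and Lg: "Lg > 0" and mu: "\<mu> > 0" and s: "s \<noteq> 0"
  shows "s \<bullet> (g + \<mu> *\<^sub>R s) > 0"
    and "(g + \<mu> *\<^sub>R s) \<bullet> (g + \<mu> *\<^sub>R s) \<le> (Lg + \<mu>) * (s \<bullet> (g + \<mu> *\<^sub>R s))"
    and "norm (g + \<mu> *\<^sub>R s) \<le> (Lg + \<mu>) * norm s"
    and "\<mu> * (norm s)\<^sup>2 \<le> s \<bullet> (g + \<mu> *\<^sub>R s)"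
proof -
  have gs0: "g \<bullet> s \<ge> 0"
  proof (rule ccontr)
    assume "\<not> g \<bullet> s \<ge> 0"
    then have "Lg * (g \<bullet> s) < 0" using Lg by (simp add: mult_pos_neg)
    then show False using gs by (smt (verit) zero_le_power2)
  qed
  have ns: "norm s > 0" using s by simp
  have e: "s \<bullet> (g + \<mu> *\<^sub>R s) = g \<bullet> s + \<mu> * (norm s)\<^sup>2"
    by (simp add: inner_add_right inner_commute power2_norm_eq_inner)
  show "\<mu> * (norm s)\<^sup>2 \<le> s \<bullet> (g + \<mu> *\<^sub>R s)" using e gs0 by simp
  show "s \<bullet> (g + \<mu> *\<^sub>R s) > 0" using e gs0 mu ns by (smt (verit) mult_pos_pos zero_less_power)
  have cs: "g \<bullet> s \<le> norm g * norm s" by (metis inner_commute norm_cauchy_schwarz)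
  have ng: "norm g \<le> Lg * norm s"
  proof (cases "norm g = 0")
    case True then show ?thesis using Lg by simp
  next
    case False
    then have "norm g * norm g \<le> Lg * norm s * norm g"
      using gs cs Lg by (smt (verit) mult_left_mono power2_eq_square mult.commute mult.assoc)
    then show ?thesis using False by (simp add: mult_le_cancel_right)
  qed
  show "norm (g + \<mu> *\<^sub>R s) \<le> (Lg + \<mu>) * norm s"
    using norm_triangle_ineq[of g "\<mu> *\<^sub>R s"] ng mu by (simp add: distrib_right)
  have "(g + \<mu> *\<^sub>R s) \<bullet> (g + \<mu> *\<^sub>R s) = (norm g)\<^sup>2 + 2 * \<mu> * (g \<bullet> s) + \<mu>\<^sup>2 * (norm s)\<^sup>2"
    unfolding power2_norm_eq_inner by (simp add: inner_add_left inner_add_right inner_commute power2_eq_square algebra_simps)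
  moreover have "(Lg + \<mu>) * (s \<bullet> (g + \<mu> *\<^sub>R s)) = Lg * (g \<bullet> s) + \<mu> * (g \<bullet> s) + Lg * \<mu> * (norm s)\<^sup>2 + \<mu>\<^sup>2 * (norm s)\<^sup>2"
    unfolding e by (simp add: algebra_simps power2_eq_square)
  moreover have "\<mu> * (g \<bullet> s) \<le> Lg * \<mu> * (norm s)\<^sup>2"
  proof -
    have "g \<bullet> s \<le> Lg * (norm s)\<^sup>2"
      using cs ng ns by (smt (verit) mult_right_mono norm_ge_zero power2_eq_square mult.assoc)
    then show ?thesis using mu by (smt (verit) mult_left_mono mult.commute mult.left_commute)
  qed
  ultimately show "(g + \<mu> *\<^sub>R s) \<bullet> (g + \<mu> *\<^sub>R s) \<le> (Lg + \<mu>) * (s \<bullet> (g + \<mu> *\<^sub>R s))"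
    using gs by linarith
qed

lemma good_mono:
  fixes s y :: "real^'n"
  assumes "s \<bullet> y > 0" "y \<bullet> y \<le> L' * (s \<bullet> y)" "norm y \<le> L' * norm s" "\<mu>' * (norm s)\<^sup>2 \<le> s \<bullet> y"
    "L' \<le> L" "\<mu> \<le> \<mu>'"
  shows "good L \<mu> s y"
proof -
  have "L' * (s \<bullet> y) \<le> L * (s \<bullet> y)" using assms by (intro mult_right_mono) auto
  moreover have "L' * norm s \<le> L * norm s" using assms by (intro mult_right_mono) auto
  moreover have "\<mu> * (norm s)\<^sup>2 \<le> \<mu>' * (norm s)\<^sup>2" using assms by (intro mult_right_mono) auto
  ultimately show ?thesis using assms unfolding good_def by linarith
qed

lemma hist_gen_sub: "{om j i -` A \<inter> space M | j i A. 1 \<le> j \<and> j \<le> N i \<and> i < k \<and> A \<in> sets W} \<subseteq> Pow (space M)"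
  by auto

lemma hist_space[simp]: "space (hist M W om N k) = space M"
  unfolding hist_def by (rule space_measure_of[OF hist_gen_sub])

lemma hist_sets: "sets (hist M W om N k) = sigma_sets (space M) {om j i -` A \<inter> space M | j i A. 1 \<le> j \<and> j \<le> N i \<and> i < k \<and> A \<in> sets W}"
  unfolding hist_def by (rule sets_measure_of[OF hist_gen_sub])

lemma hist_mono:
  assumes "k \<le> k'" "f \<in> hist M W om N k \<rightarrow>\<^sub>M X"
  shows "f \<in> hist M W om N k' \<rightarrow>\<^sub>M X"
proof (rule measurableI)
  fix x assume "x \<in> space (hist M W om N k')"
  then show "f x \<in> space X" using measurable_space[OF assms(2)] by simp
next
  fix A assume "A \<in> sets X"
  then have "f -` A \<inter> space (hist M W om N k) \<in> sets (hist M W om N k)"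
    using measurable_sets[OF assms(2)] by blast
  moreover have "sets (hist M W om N k) \<subseteq> sets (hist M W om N k')"
    unfolding hist_sets using assms(1) by (intro sigma_sets_mono') (blast intro: less_le_trans)
  ultimately show "f -` A \<inter> space (hist M W om N k') \<in> sets (hist M W om N k')" by auto
qed

lemma hist_om:
  assumes "om j i \<in> M \<rightarrow>\<^sub>M W" "1 \<le> j" "j \<le> N i" "i < k"
  shows "om j i \<in> hist M W om N k \<rightarrow>\<^sub>M W"
proof (rule measurableI)
  fix x assume "x \<in> space (hist M W om N k)"
  then show "om j i x \<in> space W" using measurable_space[OF assms(1)] by simp
next
  fix A assume "A \<in> sets W"
  then show "om j i -` A \<inter> space (hist M W om N k) \<in> sets (hist M W om N k)"
    unfolding hist_sets hist_space using assms by (intro sigma_sets.Basic) blast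
qed

lemma borel_measurable_vec_nth[measurable]:
  fixes f :: "'a \<Rightarrow> 'b::euclidean_space ^ 'n"
  assumes "f \<in> borel_measurable M"
  shows "(\<lambda>x. f x $ i) \<in> borel_measurable M"
  using measurable_compose[OF assms borel_measurable_continuous_onI[OF linear_continuous_on[OF bounded_linear_vec_nth]]]
  by simp

lemma borel_measurable_vecI:
  fixes f :: "'a \<Rightarrow> 'b::euclidean_space ^ 'n"
  assumes "\<And>i. (\<lambda>x. f x $ i) \<in> borel_measurable M"
  shows "f \<in> borel_measurable M"
proof (subst borel_measurable_euclidean_space, intro ballI)
  fix b :: "'b^'n" assume "b \<in> Basis"
  then obtain i u where b: "b = axis i u" and u: "u \<in> Basis" unfolding Basis_vec_def by auto
  have "(\<lambda>x. f x $ i \<bullet> u) \<in> borel_measurable M" using assms[of i] by measurable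
  then show "(\<lambda>x. f x \<bullet> b) \<in> borel_measurable M" unfolding b inner_axis .
qed

lemma meas_mm[measurable]:
  fixes A B :: "'a \<Rightarrow> real^'n^'n"
  assumes [measurable]: "A \<in> borel_measurable M" "B \<in> borel_measurable M"
  shows "(\<lambda>x. A x ** B x) \<in> borel_measurable M"
  by (intro borel_measurable_vecI) (simp add: matrix_matrix_mult_def)

lemma meas_mv[measurable]:
  fixes A :: "'a \<Rightarrow> real^'n^'n" and v :: "'a \<Rightarrow> real^'n"
  assumes [measurable]: "A \<in> borel_measurable M" "v \<in> borel_measurable M"
  shows "(\<lambda>x. A x *v v x) \<in> borel_measurable M"
  by (intro borel_measurable_vecI) (simp add: matrix_vector_mult_def)

lemma meas_transpose[measurable]:
  fixes A :: "'a \<Rightarrow> real^'n^'n"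
  assumes [measurable]: "A \<in> borel_measurable M"
  shows "(\<lambda>x. transpose (A x)) \<in> borel_measurable M"
  by (intro borel_measurable_vecI) (simp add: transpose_def)

lemma meas_outer[measurable]:
  fixes u v :: "'a \<Rightarrow> real^'n"
  assumes [measurable]: "u \<in> borel_measurable M" "v \<in> borel_measurable M"
  shows "(\<lambda>x. outer (u x) (v x)) \<in> borel_measurable M"
  by (intro borel_measurable_vecI) (simp add: outer_def)

lemma lbfgs_meas:
  fixes S Y :: "'a \<Rightarrow> nat \<Rightarrow> real^'n"
  assumes S: "\<And>i. i \<le> k \<Longrightarrow> (\<lambda>a. S a i) \<in> borel_measurable Q"
    and Y: "\<And>i. i \<le> k \<Longrightarrow> (\<lambda>a. Y a i) \<in> borel_measurable Q"
  shows "(\<lambda>a. lbfgs_H (S a) (Y a) m k j) \<in> borel_measurable Q"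
proof (induction j)
  case 0
  have [measurable]: "(\<lambda>a. S a k) \<in> borel_measurable Q" "(\<lambda>a. Y a k) \<in> borel_measurable Q"
    using S Y by auto
  show ?case by simp
next
  case (Suc j)
  define i where "i = k - 2 * (m - Suc j)"
  have [measurable]: "(\<lambda>a. S a i) \<in> borel_measurable Q" "(\<lambda>a. Y a i) \<in> borel_measurable Q"
    using S Y by (auto simp: i_def)
  note [measurable] = Suc.IH
  show ?case by (simp add: Let_def i_def[symmetric])
qed

lemma dir_deriv:
  assumes "(f has_derivative (\<lambda>h. g \<bullet> h)) (at x)"
  shows "((\<lambda>t. f (x + t *\<^sub>R d)) has_real_derivative (g \<bullet> d)) (at 0)"
proof -
  have l: "((\<lambda>t::real. x + t *\<^sub>R d) has_derivative (\<lambda>t. t *\<^sub>R d)) (at 0)"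
    by (auto intro!: derivative_eq_intros)
  have "((\<lambda>t. f (x + t *\<^sub>R d)) has_derivative (\<lambda>t. g \<bullet> (t *\<^sub>R d))) (at 0)"
    using has_derivative_compose[OF l, of f "\<lambda>h. g \<bullet> h"] assms by simp
  moreover have "(\<lambda>t. g \<bullet> (t *\<^sub>R d)) = (*) (g \<bullet> d)" by (auto simp: mult.commute)
  ultimately show ?thesis unfolding has_field_derivative_def by simp
qed

lemma grad_meas:
  fixes F :: "real \<Rightarrow> real^'n \<Rightarrow> 'w \<Rightarrow> real" and gradF :: "real \<Rightarrow> real^'n \<Rightarrow> 'w \<Rightarrow> real^'n"
  assumes Fm: "(\<lambda>(z, w). F e z w) \<in> borel_measurable (borel \<Otimes>\<^sub>M W)"
    and Fg: "\<And>z w. w \<in> space W \<Longrightarrow> ((\<lambda>z. F e z w) has_derivative (\<lambda>h. gradF e z w \<bullet> h)) (at z)"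
    and Z: "Z \<in> borel_measurable Q" and Om: "Om \<in> Q \<rightarrow>\<^sub>M W"
  shows "(\<lambda>a. gradF e (Z a) (Om a)) \<in> borel_measurable Q"
proof (rule borel_measurable_vecI)
  fix l
  define d :: "real^'n" where "d = axis l 1"
  define t where "t = (\<lambda>p::nat. 1 / real (Suc p))"
  define u where "u = (\<lambda>p a. (F e (Z a + t p *\<^sub>R d) (Om a) - F e (Z a) (Om a)) / t p)"
  have FZ: "(\<lambda>a. F e (Z' a) (Om a)) \<in> borel_measurable Q" if "Z' \<in> borel_measurable Q" for Z'
    using measurable_compose[OF measurable_Pair[OF that Om] Fm] by simp
  have um: "u p \<in> borel_measurable Q" for p
  proof -
    have "(\<lambda>a. Z a + t p *\<^sub>R d) \<in> borel_measurable Q" using Z by measurable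
    then have "(\<lambda>a. F e (Z a + t p *\<^sub>R d) (Om a)) \<in> borel_measurable Q" by (rule FZ)
    moreover have "(\<lambda>a. F e (Z a) (Om a)) \<in> borel_measurable Q" using FZ[OF Z] .
    ultimately show ?thesis unfolding u_def by measurable
  qed
  have "(\<lambda>p. u p a) \<longlonglongrightarrow> gradF e (Z a) (Om a) $ l" if a: "a \<in> space Q" for a
  proof -
    have w: "Om a \<in> space W" using measurable_space[OF Om a] .
    have D: "((\<lambda>h. F e (Z a + h *\<^sub>R d) (Om a)) has_real_derivative (gradF e (Z a) (Om a) \<bullet> d)) (at 0)"
      by (rule dir_deriv[OF Fg[OF w]])
    have lim: "(\<lambda>h. (F e (Z a + (0 + h) *\<^sub>R d) (Om a) - F e (Z a + 0 *\<^sub>R d) (Om a)) / h) \<midarrow>0\<rightarrow> gradF e (Z a) (Om a) \<bullet> d"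
      using DERIV_D[OF D] by simp
    have t0: "t \<longlonglongrightarrow> 0" unfolding t_def using LIMSEQ_inverse_real_of_nat by (simp add: inverse_eq_divide)
    have tn: "\<forall>p. t p \<noteq> 0" unfolding t_def by simp
    have "(\<lambda>p. (\<lambda>h. (F e (Z a + (0 + h) *\<^sub>R d) (Om a) - F e (Z a + 0 *\<^sub>R d) (Om a)) / h) (t p)) \<longlonglongrightarrow> gradF e (Z a) (Om a) \<bullet> d"
      using LIMSEQ_SEQ_conv[THEN iffD2, OF lim] t0 tn by blast
    then show ?thesis unfolding u_def d_def by (simp add: inner_axis)
  qed
  then show "(\<lambda>a. gradF e (Z a) (Om a) $ l) \<in> borel_measurable Q"
    by (rule borel_measurable_LIMSEQ_real[OF _ um])
qed

lemma fact_le_pow_pred: "1 \<le> k \<Longrightarrow> fact k \<le> (k::nat)^(k - 1)"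
proof (induction k)
  case 0 then show ?case by simp
next
  case (Suc k)
  show ?case
  proof (cases "k = 0")
    case True then show ?thesis by simp
  next
    case False
    then have "fact k \<le> k^(k-1)" using Suc by simp
    also have "\<dots> \<le> (Suc k)^(k-1)" by (intro power_mono) auto
    finally have "Suc k * fact k \<le> Suc k * (Suc k)^(k-1)" by (rule mult_le_mono2)
    also have "\<dots> = (Suc k)^k" using False by (cases k) auto
    finally show ?thesis by (simp add: fact_Suc)
  qed
qed

lemma four_pow_bound: "1 \<le> m \<Longrightarrow> (m + 1) * 4^m \<le> (2 * m + 1)^(m + 1::nat)"
proof (induction m rule: nat_induct_at_least)
  case base then show ?case by simp
next
  case (Suc m)
  show ?case
  proof (cases "m = 1")
    case True then show ?thesis by simp
  next
    case False
    then have m2: "m \<ge> 2" using Suc by simp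
    have "(Suc m + 1) * 4 ^ Suc m = 4 * (m + 2) * 4^m" by (simp add: algebra_simps)
    also have "4 * (m + 2) \<le> (2 * m + 3) * (m + 1)"
    proof -
      have "4 * (m + 2) = 4 * m + 8" by simp
      also have "\<dots> \<le> 2 * m * m + 5 * m + 3"
      proof -
        have "2 * m * 2 \<le> 2 * m * m" using m2 by (rule mult_le_mono2)
        then show ?thesis using m2 by linarith
      qed
      also have "\<dots> = (2 * m + 3) * (m + 1)" by (simp add: algebra_simps)
      finally show ?thesis .
    qed
    then have "4 * (m + 2) * 4^m \<le> (2 * m + 3) * (m + 1) * 4^m" by (rule mult_le_mono1)
    also have "\<dots> = (2 * m + 3) * ((m + 1) * 4^m)" by (simp only: mult.assoc)
    also have "\<dots> \<le> (2 * m + 3) * (2 * m + 1)^(m + 1)" using Suc.IH by simp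
    also have "\<dots> \<le> (2 * m + 3) * (2 * m + 3)^(m + 1)" by (intro mult_left_mono power_mono) auto
    also have "\<dots> = (2 * m + 3)^(Suc (m + 1))" by (simp only: power_Suc)
    also have e: "2 * m + 3 = 2 * Suc m + 1" by simp
    also have "Suc (m + 1) = Suc m + 1" by simp
    finally show ?thesis .
  qed
qed

lemma nat_bound:
  fixes m n :: nat
  assumes "1 \<le> m" "m < n"
  shows "(m + 1) * 4^m * fact (n - 1) \<le> (m + n)^(n + m - 1)"
proof -
  have h: "n - 1 - 1 = n - 2" by simp
  have "fact (n - 1) \<le> (n - 1)^(n - 2)" using fact_le_pow_pred[of "n - 1"] assms unfolding h by simp
  also have "\<dots> \<le> (m + n)^(n - 2)" by (intro power_mono) auto
  finally have f: "fact (n - 1) \<le> (m + n)^(n - 2)" .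
  have "(m + 1) * 4^m \<le> (2 * m + 1)^(m + 1)" using assms by (intro four_pow_bound)
  also have "\<dots> \<le> (m + n)^(m + 1)" using assms by (intro power_mono) auto
  finally have g: "(m + 1) * 4^m \<le> (m + n)^(m + 1)" .
  have "(m + 1) * 4^m * fact (n - 1) \<le> (m + n)^(m + 1) * (m + n)^(n - 2)"
    using f g by (intro mult_mono) auto
  also have "\<dots> = (m + n)^(m + 1 + (n - 2))" by (simp only: power_add)
  also have "m + 1 + (n - 2) = n + m - 1" using assms by simp
  finally show ?thesis .
qed

lemma final_ineq:
  fixes r \<mu> :: real and m n :: nat
  assumes m: "1 \<le> m" "m < n" and r: "r \<ge> 1" and mu: "\<mu> > 0"
  shows "(\<Sum>p\<le>m. (1 + r)^(2*p)) / \<mu> \<le> (real (m + n))^(n + m - 1) * (r * \<mu>)^(n + m - 1) / (fact (n - 1) * \<mu>^(n + m))"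
proof -
  have "(\<Sum>p\<le>m. (1 + r)^(2*p)) \<le> (\<Sum>p\<le>m. (1 + r)^(2*m))"
    using r by (intro sum_mono power_increasing) auto
  also have "\<dots> = real (m + 1) * (1 + r)^(2*m)" by simp
  finally have s1: "(\<Sum>p\<le>m. (1 + r)^(2*p)) \<le> real (m + 1) * (1 + r)^(2*m)" .
  have p1: "(1 + r)^(2*m) \<le> (2 * r)^(2*m)" using r by (intro power_mono) auto
  have p2: "(2 * r)^(2*m) = 4^m * r^(2*m)" by (simp add: power_mult_distrib power_mult)
  have p3: "r^(2*m) \<le> r^(n + m - 1)" using r m by (intro power_increasing) auto
  have "(1 + r)^(2*m) \<le> 4^m * r^(2*m)" using p1 unfolding p2 .
  also have "\<dots> \<le> 4^m * r^(n + m - 1)" using p3 by (intro mult_left_mono) auto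
  finally have "(1 + r)^(2*m) \<le> 4^m * r^(n + m - 1)" .
  then have s: "(\<Sum>p\<le>m. (1 + r)^(2*p)) \<le> real (m + 1) * (4^m * r^(n + m - 1))"
    using s1 by (smt (verit) mult_left_mono of_nat_0_le_iff)
  have nb0: "real ((m + 1) * 4^m * fact (n - 1)) \<le> real ((m + n)^(n + m - 1))"
    using nat_bound[OF m] by (simp only: of_nat_le_iff)
  then have nb: "real (m + 1) * 4^m * fact (n - 1) \<le> (real (m + n))^(n + m - 1)"
    by (simp only: of_nat_mult of_nat_power of_nat_fact of_nat_numeral)
  have fp: "(fact (n - 1) :: real) > 0" by simp
  have rp: "r^(n + m - 1) \<ge> 0" using r by simp
  have "(\<Sum>p\<le>m. (1 + r)^(2*p)) * fact (n - 1) \<le> real (m + 1) * 4^m * fact (n - 1) * r^(n + m - 1)"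
  proof -
    have "(\<Sum>p\<le>m. (1 + r)^(2*p)) * fact (n - 1) \<le> real (m + 1) * (4^m * r^(n + m - 1)) * fact (n - 1)"
      using s fp by (intro mult_right_mono) auto
    then show ?thesis by (simp only: mult_ac)
  qed
  also have "\<dots> \<le> (real (m + n))^(n + m - 1) * r^(n + m - 1)"
    using nb rp by (intro mult_right_mono) auto
  finally have key: "(\<Sum>p\<le>m. (1 + r)^(2*p)) * fact (n - 1) \<le> (real (m + n))^(n + m - 1) * r^(n + m - 1)" .
  have mu_pow: "\<mu>^(n + m) = \<mu>^(n + m - 1) * \<mu>" using m by (simp flip: power_Suc2)
  have "(real (m + n))^(n + m - 1) * (r * \<mu>)^(n + m - 1) / (fact (n - 1) * \<mu>^(n + m))
      = ((real (m + n))^(n + m - 1) * r^(n + m - 1)) / (fact (n - 1) * \<mu>)"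
    using mu unfolding mu_pow power_mult_distrib by (simp add: field_simps)
  moreover have "(\<Sum>p\<le>m. (1 + r)^(2*p)) / \<mu> \<le> ((real (m + n))^(n + m - 1) * r^(n + m - 1)) / (fact (n - 1) * \<mu>)"
    using key fp mu by (simp add: field_simps)
  ultimately show ?thesis by simp
qed

theorem mainTheorem12:
  fixes M :: "'a measure" and W :: "'w measure"
    and F :: "real \<Rightarrow> real^'n \<Rightarrow> 'w \<Rightarrow> real"
    and gradF :: "real \<Rightarrow> real^'n \<Rightarrow> 'w \<Rightarrow> real^'n"
    and om :: "nat \<Rightarrow> nat \<Rightarrow> 'a \<Rightarrow> 'w"
    and N :: "nat \<Rightarrow> nat"
    and gamma eta mu :: "nat \<Rightarrow> real"
    and delta deltab :: real
    and n m :: nat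
    and x0 :: "real^'n"
    and x :: "nat \<Rightarrow> 'a \<Rightarrow> real^'n"
    and H :: "nat \<Rightarrow> 'a \<Rightarrow> real^'n^'n"
  assumes prob: "prob_space M"
    and om_meas: "\<And>j k. om j k \<in> M \<rightarrow>\<^sub>M W"
    and F_meas: "\<And>e. e > 0 \<Longrightarrow> (\<lambda>(z, w). F e z w) \<in> borel_measurable (borel \<Otimes>\<^sub>M W)"
    and F_grad: "\<And>e z w. e > 0 \<Longrightarrow> w \<in> space W \<Longrightarrow>
                   ((\<lambda>z. F e z w) has_derivative (\<lambda>h. gradF e z w \<bullet> h)) (at z)"
    and F_C1: "\<And>e w. e > 0 \<Longrightarrow> w \<in> space W \<Longrightarrow> continuous_on UNIV (\<lambda>z. gradF e z w)"
    and F_convex: "\<And>e w. e > 0 \<Longrightarrow> w \<in> space W \<Longrightarrow> convex_on UNIV (\<lambda>z. F e z w)"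
    and F_smooth: "\<And>e z z' w. e > 0 \<Longrightarrow> w \<in> space W \<Longrightarrow>
                   norm (gradF e z w - gradF e z' w) \<le> (1 / e) * norm (z - z')"
    and n_def: "n = CARD('n)"
    and m_pos: "1 \<le> m" and m_lt: "m < n"
    and delta: "0 < delta" "delta \<le> 1"
    and deltab: "0 < deltab" "deltab \<le> 1"
    and params_pos: "\<And>k. gamma k > 0" "\<And>k. eta k > 0" "\<And>k. mu k > 0"
    and N_pos: "\<And>k. 1 \<le> N k"
    and params_odd: "\<And>k. odd k \<Longrightarrow> mu k = mu (k - 1) \<and> eta k = eta (k - 1)"
    and params_even: "\<And>k. even k \<Longrightarrow> 0 < k \<Longrightarrow> mu k < mu (k - 1) \<and> eta k < eta (k - 1)"
    and x_init: "\<And>a. x 0 a = x0"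
    and x_step: "\<And>k a. x (Suc k) a =
        x k a - gamma k *\<^sub>R (H k a *v avg_grad gradF x0 eta mu N (\<lambda>j i. om j i a) (\<lambda>i. x i a) k)"
    and H_init_meas: "\<And>k. k \<le> 2 * m \<Longrightarrow> H k \<in> borel_measurable (hist M W om N k)"
    and H_odd: "\<And>k a. 2 * m < k \<Longrightarrow> odd k \<Longrightarrow>
        H k a = lbfgs_H (sdiff (\<lambda>i. x i a))
                        (ydiff gradF eta mu N (\<lambda>j i. om j i a) delta deltab (\<lambda>i. x i a)) m k m"
    and H_even: "\<And>k a. 2 * m < k \<Longrightarrow> even k \<Longrightarrow> H k a = H (k - 1) a"
    and nondegenerate: "\<And>i a. a \<in> space M \<Longrightarrow> odd i \<Longrightarrow> 2 < i \<Longrightarrow> x i a \<noteq> x (i - 1) a"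
  shows
    "(\<forall>k a. a \<in> space M \<longrightarrow> odd k \<longrightarrow> 2 * m < k \<longrightarrow>
        sdiff (\<lambda>i. x i a) k \<bullet> ydiff gradF eta mu N (\<lambda>j i. om j i a) delta deltab (\<lambda>i. x i a) k > 0)
   \<and> (\<forall>k a. a \<in> space M \<longrightarrow> odd k \<longrightarrow> 2 * m < k \<longrightarrow>
        H k a *v ydiff gradF eta mu N (\<lambda>j i. om j i a) delta deltab (\<lambda>i. x i a) k
          = sdiff (\<lambda>i. x i a) k)
   \<and> (\<forall>k. 2 * m < k \<longrightarrow>
        (\<forall>a \<in> space M. transpose (H k a) = H k a)
      \<and> H k \<in> borel_measurable (hist M W om N k)
      \<and> (AE a in M.
           loewner_le ((1 / (real (m + n) * (1 / eta k powr delta + mu 0 powr deltab))) *\<^sub>R mat 1) (H k a)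
         \<and> loewner_le (H k a)
             ((real (m + n) ^ (n + m - 1) * (1 / eta k powr delta + mu 0 powr deltab) ^ (n + m - 1)
               / (fact (n - 1) * mu k powr (real (n + m) * deltab))) *\<^sub>R mat 1)))"
proof -
  define Lc where "Lc = (\<lambda>k. 1 / eta k powr delta + mu 0 powr deltab)"
  define Mc where "Mc = (\<lambda>k. mu k powr deltab)"
  have eta_pos: "\<And>k. eta k > 0" and mu_pos: "\<And>k. mu k > 0" using params_pos by auto
  have mono_par: "\<And>i k. i \<le> k \<Longrightarrow> eta k \<le> eta i \<and> mu k \<le> mu i"
  proof -
    fix i k :: nat assume "i \<le> k"
    then show "eta k \<le> eta i \<and> mu k \<le> mu i"
    proof (induction k)
      case 0 then show ?case by simp
    next
      case (Suc k)
      have step: "eta (Suc k) \<le> eta k \<and> mu (Suc k) \<le> mu k"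
      proof (cases "odd (Suc k)")
        case True then show ?thesis using params_odd[of "Suc k"] by simp
      next
        case False then show ?thesis using params_even[of "Suc k"] by (simp add: less_imp_le)
      qed
      show ?case
      proof (cases "i = Suc k")
        case True then show ?thesis by simp
      next
        case False then have "i \<le> k" using Suc.prems by simp
        then show ?thesis using Suc.IH step by auto
      qed
    qed
  qed
  have Lc_pos: "Lc k > 0" for k
  proof -
    have "0 < 1 / eta k powr delta" using eta_pos[of k] by simp
    moreover have "0 < mu 0 powr deltab" using mu_pos[of 0] by simp
    ultimately show ?thesis unfolding Lc_def by (rule add_pos_pos)
  qed
  have Mc_pos: "Mc k > 0" for k unfolding Mc_def using mu_pos[of k] by simp
  have Mc_le_Lc: "\<And>k. Mc k \<le> Lc k"
  proof -
    fix k
    have "mu k powr deltab \<le> mu 0 powr deltab"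
      using mono_par[of 0 k] mu_pos deltab by (intro powr_mono2) (auto simp: less_imp_le)
    moreover have "0 < 1 / eta k powr delta" using eta_pos[of k] by simp
    ultimately show "Mc k \<le> Lc k" unfolding Mc_def Lc_def by linarith
  qed
  have good_idx: "good (Lc k) (Mc k) (sdiff (\<lambda>i. x i a) i)
        (ydiff gradF eta mu N (\<lambda>j i. om j i a) delta deltab (\<lambda>i. x i a) i)"
    if a: "a \<in> space M" and i: "odd i" "2 < i" "i \<le> k" for a i k
  proof -
    define e where "e = eta i powr delta"
    define mi where "mi = mu i powr deltab"
    define s where "s = x i a - x (i - 1) a"
    define \<Delta> where "\<Delta> = (\<lambda>j. gradF e (x i a) (om j (i - 1) a) - gradF e (x (i - 1) a) (om j (i - 1) a))"
    define g where "g = (1 / real (N (i - 1))) *\<^sub>R (\<Sum>j=1..N (i - 1). \<Delta> j)"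
    have e: "e > 0" unfolding e_def using eta_pos[of i] by simp
    have mi: "mi > 0" unfolding mi_def using mu_pos[of i] by simp
    have sd: "sdiff (\<lambda>i. x i a) i = s" unfolding sdiff_def s_def by simp
    have yd: "ydiff gradF eta mu N (\<lambda>j i. om j i a) delta deltab (\<lambda>i. x i a) i = g + mi *\<^sub>R s"
      unfolding ydiff_def g_def \<Delta>_def e_def mi_def sd by simp
    have s0: "s \<noteq> 0" unfolding s_def using nondegenerate[OF a i(1,2)] by simp
    have coco: "(norm (\<Delta> j))\<^sup>2 \<le> (1 / e) * (\<Delta> j \<bullet> s)" if "j \<in> {1..N (i - 1)}" for j
    proof -
      have w: "om j (i - 1) a \<in> space W" using measurable_space[OF om_meas a] .
      show ?thesis unfolding \<Delta>_def s_def
        by (rule cocoercive[where f="\<lambda>z. F e z (om j (i - 1) a)"])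
           (use F_convex[OF e w] F_grad[OF e w] F_smooth[OF e w] e in auto)
    qed
    have gg: "(norm g)\<^sup>2 \<le> (1 / e) * (g \<bullet> s)"
      unfolding g_def by (rule avg_coco) (use N_pos e coco in auto)
    have e': "0 < 1 / e" using e by simp
    note aux = y_good_aux[OF gg e' mi s0]
    have e_le: "eta k powr delta \<le> e" unfolding e_def
      using mono_par[of i k] i eta_pos delta by (intro powr_mono2) (auto simp: less_imp_le)
    have ekp: "0 < eta k powr delta" using eta_pos[of k] by simp
    have "1 / e \<le> 1 / eta k powr delta" using e_le ekp e by (intro divide_left_mono) auto
    moreover have "mi \<le> mu 0 powr deltab" unfolding mi_def
      using mono_par[of 0 i] mu_pos deltab by (intro powr_mono2) (auto simp: less_imp_le)
    ultimately have L: "1 / e + mi \<le> Lc k" unfolding Lc_def by linarith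
    have M: "Mc k \<le> mi" unfolding mi_def Mc_def
      using mono_par[of i k] i mu_pos deltab by (intro powr_mono2) (auto simp: less_imp_le)
    show ?thesis unfolding sd yd
      by (rule good_mono[OF aux(1) aux(2) aux(3) aux(4) L M])
  qed
  have odd_props: "transpose (H k a) = H k a
        \<and> (\<forall>v. (norm v)\<^sup>2 / (real (Suc m) * Lc k2) \<le> v \<bullet> (H k a *v v))
        \<and> (\<forall>v. v \<bullet> (H k a *v v) \<le> (\<Sum>p\<le>m. (1 + Lc k2 / Mc k2)^(2*p)) / Mc k2 * (norm v)\<^sup>2)"
    if a: "a \<in> space M" and k: "odd k" "2 * m < k" "k \<le> k2" for a k k2
  proof -
    have gk: "good (Lc k2) (Mc k2) (sdiff (\<lambda>i. x i a) k)
        (ydiff gradF eta mu N (\<lambda>j i. om j i a) delta deltab (\<lambda>i. x i a) k)"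
    proof -
      have "2 < k" using k m_pos by linarith
      then show ?thesis using good_idx[OF a k(1) _ k(3)] by blast
    qed
    have gj: "good (Lc k2) (Mc k2) (sdiff (\<lambda>i. x i a) (k - 2 * (m - Suc j)))
        (ydiff gradF eta mu N (\<lambda>j i. om j i a) delta deltab (\<lambda>i. x i a) (k - 2 * (m - Suc j)))"
      if j: "j < m" for j
    proof -
      have t: "2 * (m - Suc j) + 2 < k" using j k by simp
      have "odd (k - 2 * (m - Suc j))" using k(1) t by simp
      moreover have "2 < k - 2 * (m - Suc j)" using t by simp
      moreover have "k - 2 * (m - Suc j) \<le> k2" using k by simp
      ultimately show ?thesis by (rule good_idx[OF a])
    qed
    have "transpose (lbfgs_H (sdiff (\<lambda>i. x i a)) (ydiff gradF eta mu N (\<lambda>j i. om j i a) delta deltab (\<lambda>i. x i a)) m k m)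
            = lbfgs_H (sdiff (\<lambda>i. x i a)) (ydiff gradF eta mu N (\<lambda>j i. om j i a) delta deltab (\<lambda>i. x i a)) m k m
        \<and> (\<forall>v. (norm v)\<^sup>2 / (real (Suc m) * Lc k2) \<le> v \<bullet> (lbfgs_H (sdiff (\<lambda>i. x i a)) (ydiff gradF eta mu N (\<lambda>j i. om j i a) delta deltab (\<lambda>i. x i a)) m k m *v v))
        \<and> (\<forall>v. v \<bullet> (lbfgs_H (sdiff (\<lambda>i. x i a)) (ydiff gradF eta mu N (\<lambda>j i. om j i a) delta deltab (\<lambda>i. x i a)) m k m *v v) \<le> (\<Sum>p\<le>m. (1 + Lc k2 / Mc k2)^(2*p)) / Mc k2 * (norm v)\<^sup>2)"
      by (rule lbfgs_props[OF Lc_pos Mc_pos gk gj]) auto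
    then show ?thesis using H_odd[OF k(2) k(1), of a] by simp
  qed
  have meas: "x k \<in> borel_measurable (hist M W om N k) \<and> H k \<in> borel_measurable (hist M W om N k)" for k
  proof (induction k rule: less_induct)
    case (less k)
    have xk: "x k \<in> borel_measurable (hist M W om N k)"
    proof (cases k)
      case 0
      have "x 0 = (\<lambda>a. x0)" using x_init by auto
      then show ?thesis using 0 by simp
    next
      case (Suc k')
      have IHk': "x k' \<in> borel_measurable (hist M W om N k') \<and> H k' \<in> borel_measurable (hist M W om N k')"
        using less.IH[of k'] Suc by blast
      have [measurable]: "x k' \<in> borel_measurable (hist M W om N (Suc k'))"
        using IHk' by (intro hist_mono[of k' "Suc k'"]) auto
      have [measurable]: "H k' \<in> borel_measurable (hist M W om N (Suc k'))"
        using IHk' by (intro hist_mono[of k' "Suc k'"]) auto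
      have G: "(\<lambda>a. gradF (eta k') (x k' a) (om j k' a)) \<in> borel_measurable (hist M W om N (Suc k'))"
        if "j \<in> {1..N k'}" for j
      proof -
        have ep: "eta k' > 0" using eta_pos[of k'] .
        have om: "om j k' \<in> hist M W om N (Suc k') \<rightarrow>\<^sub>M W" using that by (intro hist_om[OF om_meas]) auto
        show ?thesis
          by (rule grad_meas[where F=F and gradF=gradF and e="eta k'", OF F_meas[OF ep] F_grad[OF ep] _ om]) measurable
      qed
      have "(\<lambda>a. \<Sum>j=1..N k'. gradF (eta k') (x k' a) (om j k' a) + mu k' *\<^sub>R (x k' a - x0))
              \<in> borel_measurable (hist M W om N (Suc k'))"
      proof (rule borel_measurable_sum)
        fix j assume "j \<in> {1..N k'}"
        note [measurable] = G[OF this]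
        show "(\<lambda>a. gradF (eta k') (x k' a) (om j k' a) + mu k' *\<^sub>R (x k' a - x0)) \<in> borel_measurable (hist M W om N (Suc k'))"
          by measurable
      qed
      note [measurable] = this
      have "x (Suc k') = (\<lambda>a. x k' a - gamma k' *\<^sub>R (H k' a *v ((1 / real (N k')) *\<^sub>R
              (\<Sum>j=1..N k'. gradF (eta k') (x k' a) (om j k' a) + mu k' *\<^sub>R (x k' a - x0)))))"
      proof
        fix a show "x (Suc k') a = x k' a - gamma k' *\<^sub>R (H k' a *v ((1 / real (N k')) *\<^sub>R
              (\<Sum>j=1..N k'. gradF (eta k') (x k' a) (om j k' a) + mu k' *\<^sub>R (x k' a - x0))))"
          unfolding x_step[of k' a] avg_grad_def gradFeta_mu_def by (rule refl)
      qed
      moreover have "(\<lambda>a. x k' a - gamma k' *\<^sub>R (H k' a *v ((1 / real (N k')) *\<^sub>R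
              (\<Sum>j=1..N k'. gradF (eta k') (x k' a) (om j k' a) + mu k' *\<^sub>R (x k' a - x0)))))
            \<in> borel_measurable (hist M W om N (Suc k'))"
        by measurable
      ultimately show ?thesis using Suc by simp
    qed
    have xall: "x i \<in> borel_measurable (hist M W om N k)" if "i \<le> k" for i
    proof (cases "i = k")
      case True then show ?thesis using xk by simp
    next
      case False
      then have "i < k" using that by simp
      then have "x i \<in> borel_measurable (hist M W om N i)" using less.IH[of i] by blast
      then show ?thesis using that by (intro hist_mono[of i k]) auto
    qed
    have Hk: "H k \<in> borel_measurable (hist M W om N k)"
    proof (cases "k \<le> 2 * m")
      case True then show ?thesis by (rule H_init_meas)
    next
      case False
      then have k2: "2 * m < k" by simp
      show ?thesis
      proof (cases "odd k")
        case True
        have S: "(\<lambda>a. sdiff (\<lambda>i. x i a) i) \<in> borel_measurable (hist M W om N k)" if "i \<le> k" for i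
        proof -
          have "i - 1 \<le> k" using that by simp
          note [measurable] = xall[OF that] xall[OF this]
          show ?thesis unfolding sdiff_def by measurable
        qed
        have Y: "(\<lambda>a. ydiff gradF eta mu N (\<lambda>j i. om j i a) delta deltab (\<lambda>i. x i a) i) \<in> borel_measurable (hist M W om N k)"
          if "i \<le> k" for i
        proof -
          have i1: "i - 1 \<le> k" using that by simp
          note [measurable] = xall[OF that] xall[OF i1] S[OF that]
          have ep: "eta i powr delta > 0" using eta_pos[of i] by simp
          have "(\<lambda>a. \<Sum>j=1..N (i - 1). gradF (eta i powr delta) (x i a) (om j (i - 1) a)
                  - gradF (eta i powr delta) (x (i - 1) a) (om j (i - 1) a)) \<in> borel_measurable (hist M W om N k)"
          proof (rule borel_measurable_sum)
            fix j assume j: "j \<in> {1..N (i - 1)}"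
            have om: "om j (i - 1) \<in> hist M W om N k \<rightarrow>\<^sub>M W"
              using j that k2 by (intro hist_om[OF om_meas]) auto
            have [measurable]: "(\<lambda>a. gradF (eta i powr delta) (x i a) (om j (i - 1) a)) \<in> borel_measurable (hist M W om N k)"
              by (rule grad_meas[where F=F and gradF=gradF and e="eta i powr delta", OF F_meas[OF ep] F_grad[OF ep] xall[OF that] om])
            have [measurable]: "(\<lambda>a. gradF (eta i powr delta) (x (i - 1) a) (om j (i - 1) a)) \<in> borel_measurable (hist M W om N k)"
              by (rule grad_meas[where F=F and gradF=gradF and e="eta i powr delta", OF F_meas[OF ep] F_grad[OF ep] xall[OF i1] om])
            show "(\<lambda>a. gradF (eta i powr delta) (x i a) (om j (i - 1) a)
                  - gradF (eta i powr delta) (x (i - 1) a) (om j (i - 1) a)) \<in> borel_measurable (hist M W om N k)"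
              by measurable
          qed
          note [measurable] = this
          show ?thesis unfolding ydiff_def by measurable
        qed
        have "H k = (\<lambda>a. lbfgs_H (sdiff (\<lambda>i. x i a))
                        (ydiff gradF eta mu N (\<lambda>j i. om j i a) delta deltab (\<lambda>i. x i a)) m k m)"
          using H_odd[OF k2 True] by auto
        moreover have "(\<lambda>a. lbfgs_H (sdiff (\<lambda>i. x i a))
                        (ydiff gradF eta mu N (\<lambda>j i. om j i a) delta deltab (\<lambda>i. x i a)) m k m)
              \<in> borel_measurable (hist M W om N k)"
          by (rule lbfgs_meas[where S="\<lambda>a. sdiff (\<lambda>i. x i a)"
                and Y="\<lambda>a. ydiff gradF eta mu N (\<lambda>j i. om j i a) delta deltab (\<lambda>i. x i a)", OF S Y])
        ultimately show ?thesis by simp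
      next
        case False
        have ev: "even k" using False by simp
        have "H k = H (k - 1)" by (rule ext, rule H_even[OF k2 ev])
        moreover have "H (k - 1) \<in> borel_measurable (hist M W om N k)"
        proof -
          have "k - 1 < k" using k2 by simp
          then have "H (k - 1) \<in> borel_measurable (hist M W om N (k - 1))" using less.IH[of "k - 1"] by blast
          then show ?thesis by (intro hist_mono[of "k - 1" k]) auto
        qed
        ultimately show ?thesis by simp
      qed
    qed
    show ?case using xk Hk by simp
  qed
  have partA: "\<forall>k a. a \<in> space M \<longrightarrow> odd k \<longrightarrow> 2 * m < k \<longrightarrow>
        sdiff (\<lambda>i. x i a) k \<bullet> ydiff gradF eta mu N (\<lambda>j i. om j i a) delta deltab (\<lambda>i. x i a) k > 0"
  proof (intro allI impI)
    fix k a assume "a \<in> space M" "odd k" "2 * m < k"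
    then show "sdiff (\<lambda>i. x i a) k \<bullet> ydiff gradF eta mu N (\<lambda>j i. om j i a) delta deltab (\<lambda>i. x i a) k > 0"
      using good_idx[of a k k] m_pos unfolding good_def by simp
  qed
  have partB: "\<forall>k a. a \<in> space M \<longrightarrow> odd k \<longrightarrow> 2 * m < k \<longrightarrow>
        H k a *v ydiff gradF eta mu N (\<lambda>j i. om j i a) delta deltab (\<lambda>i. x i a) k
          = sdiff (\<lambda>i. x i a) k"
  proof (intro allI impI)
    fix k a assume a: "a \<in> space M" and k: "odd k" "2 * m < k"
    then have "sdiff (\<lambda>i. x i a) k \<bullet> ydiff gradF eta mu N (\<lambda>j i. om j i a) delta deltab (\<lambda>i. x i a) k \<noteq> 0"
      using partA by force
    then show "H k a *v ydiff gradF eta mu N (\<lambda>j i. om j i a) delta deltab (\<lambda>i. x i a) k = sdiff (\<lambda>i. x i a) k"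
      unfolding H_odd[OF k(2) k(1)] by (rule lbfgs_secant[OF m_pos])
  qed
  have partC: "(\<forall>a \<in> space M. transpose (H k a) = H k a)
      \<and> H k \<in> borel_measurable (hist M W om N k)
      \<and> (AE a in M.
           loewner_le ((1 / (real (m + n) * (1 / eta k powr delta + mu 0 powr deltab))) *\<^sub>R mat 1) (H k a)
         \<and> loewner_le (H k a)
             ((real (m + n) ^ (n + m - 1) * (1 / eta k powr delta + mu 0 powr deltab) ^ (n + m - 1)
               / (fact (n - 1) * mu k powr (real (n + m) * deltab))) *\<^sub>R mat 1))"
    if k: "2 * m < k" for k
  proof -
    obtain k' where k': "odd k'" "2 * m < k'" "k' \<le> k" and Hk': "\<And>a. H k a = H k' a"
    proof (cases "odd k")
      case True then show ?thesis using that[of k] k by auto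
    next
      case False
      then have "odd (k - 1)" "2 * m < k - 1" using k by presburger+
      then show ?thesis using that[of "k - 1"] H_even[OF k] False by auto
    qed
    note P = odd_props[OF _ k', unfolded Hk'[symmetric]]
    have sym: "\<forall>a \<in> space M. transpose (H k a) = H k a" using P by blast
    have bnd: "loewner_le ((1 / (real (m + n) * (1 / eta k powr delta + mu 0 powr deltab))) *\<^sub>R mat 1) (H k a)
         \<and> loewner_le (H k a)
             ((real (m + n) ^ (n + m - 1) * (1 / eta k powr delta + mu 0 powr deltab) ^ (n + m - 1)
               / (fact (n - 1) * mu k powr (real (n + m) * deltab))) *\<^sub>R mat 1)"
      if a: "a \<in> space M" for a
    proof -
      have lo: "\<And>v. (norm v)\<^sup>2 / (real (Suc m) * Lc k) \<le> v \<bullet> (H k a *v v)"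
        and up: "\<And>v. v \<bullet> (H k a *v v) \<le> (\<Sum>p\<le>m. (1 + Lc k / Mc k)^(2*p)) / Mc k * (norm v)\<^sup>2"
        using P[OF a] by auto
      have qd: "v \<bullet> ((A - B) *v v) = v \<bullet> (A *v v) - v \<bullet> (B *v v)" for A B :: "real^'n^'n" and v
        by (simp add: matrix_vector_mult_diff_rdistrib inner_diff_right)
      have n1: "1 \<le> n" using m_lt by simp
      have L1: "(1 / eta k powr delta + mu 0 powr deltab) = Lc k" unfolding Lc_def ..
      have C1: "loewner_le ((1 / (real (m + n) * Lc k)) *\<^sub>R mat 1) (H k a)"
        unfolding loewner_le_def qd H0_qf
      proof
        fix v :: "real^'n"
        have le: "real (Suc m) * Lc k \<le> real (m + n) * Lc k"
          using n1 Lc_pos[of k] by (intro mult_right_mono) auto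
        have pos: "0 < real (Suc m) * Lc k" using Lc_pos[of k] by simp
        have "1 / (real (m + n) * Lc k) * (norm v)\<^sup>2 = (norm v)\<^sup>2 / (real (m + n) * Lc k)" by simp
        also have "\<dots> \<le> (norm v)\<^sup>2 / (real (Suc m) * Lc k)"
          using le pos by (intro divide_left_mono) auto
        finally have "1 / (real (m + n) * Lc k) * (norm v)\<^sup>2 \<le> (norm v)\<^sup>2 / (real (Suc m) * Lc k)" .
        then show "0 \<le> v \<bullet> (H k a *v v) - 1 / (real (m + n) * Lc k) * (norm v)\<^sup>2"
          using lo[of v] by simp
      qed
      have r1: "Lc k / Mc k \<ge> 1" using Mc_le_Lc[of k] Mc_pos[of k] by simp
      have fin: "(\<Sum>p\<le>m. (1 + Lc k / Mc k)^(2*p)) / Mc k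
          \<le> (real (m + n))^(n + m - 1) * (Lc k / Mc k * Mc k)^(n + m - 1) / (fact (n - 1) * (Mc k)^(n + m))"
        by (rule final_ineq[OF m_pos m_lt r1 Mc_pos])
      have LM: "Lc k / Mc k * Mc k = Lc k" using Mc_pos[of k] by simp
      have pw: "mu k powr (real (n + m) * deltab) = (Mc k)^(n + m)"
      proof -
        have "mu k powr (real (n + m) * deltab) = (mu k powr deltab) powr real (n + m)"
          by (simp add: powr_powr mult.commute)
        also have "\<dots> = (mu k powr deltab)^(n + m)" by (rule powr_realpow) (use mu_pos[of k] in simp)
        finally show ?thesis unfolding Mc_def .
      qed
      have C2: "loewner_le (H k a)
             ((real (m + n) ^ (n + m - 1) * Lc k ^ (n + m - 1)
               / (fact (n - 1) * (Mc k)^(n + m))) *\<^sub>R mat 1)"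
        unfolding loewner_le_def qd H0_qf
      proof
        fix v :: "real^'n"
        have "v \<bullet> (H k a *v v) \<le> (\<Sum>p\<le>m. (1 + Lc k / Mc k)^(2*p)) / Mc k * (norm v)\<^sup>2" by (rule up)
        also have "\<dots> \<le> (real (m + n) ^ (n + m - 1) * Lc k ^ (n + m - 1) / (fact (n - 1) * (Mc k)^(n + m))) * (norm v)\<^sup>2"
          using fin unfolding LM by (intro mult_right_mono) auto
        finally show "0 \<le> (real (m + n) ^ (n + m - 1) * Lc k ^ (n + m - 1) / (fact (n - 1) * (Mc k)^(n + m))) * (norm v)\<^sup>2
            - v \<bullet> (H k a *v v)" by simp
      qed
      show ?thesis using C1 C2 unfolding L1 pw by simp
    qed
    show ?thesis using sym meas[of k] bnd by (auto intro: AE_I2)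
  qed
  show ?thesis using partA partB partC by blast
qed

end
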